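(* A topological space $X$ is dense-pseudocompact if and only if every open subspace of $X$ is dense-pseudocompact.
   Context: A space is pseudocompact if every continuous real-valued function on it is bounded. A space $X$ is dense-pseudocompact if every dense subset of $X$ (with the subspace topology) is pseudocompact. *)

theory Defs
  imports "HOL-Analysis.Analysis"
begin

definition pseudocompact_space :: "'a topology \<Rightarrow> bool" where
  "pseudocompact_space X \<longleftrightarrow>
     (\<forall>f. continuous_map X euclideanreal f \<longrightarrow> bounded (f ` topspace X))"

definition dense_pseudocompact :: "'a topology \<Rightarrow> bool" where
  "dense_pseudocompact X \<longleftrightarrow>
     (\<forall>D. D \<subseteq> topspace X \<and> X closure_of D = topspace X
          \<longrightarrow> pseudocompact_space (subtopology X D))"

end

theory Submission
  imports Defs
begin

lemma fwd:
  assumes dp: "dense_pseudocompact X" and U: "openin X U"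
  shows "dense_pseudocompact (subtopology X U)"
  unfolding dense_pseudocompact_def
proof (intro allI impI, elim conjE)
  fix D assume Dsub: "D \<subseteq> topspace (subtopology X U)"
    and Dd: "subtopology X U closure_of D = topspace (subtopology X U)"
  have UX: "U \<subseteq> topspace X" using U by (simp add: openin_subset)
  have DU: "D \<subseteq> U" "D \<subseteq> topspace X" using Dsub by auto
  have sub: "subtopology (subtopology X U) D = subtopology X D"
    using DU by (simp add: subtopology_subtopology Int_absorb1)
  define C where "C = X closure_of U"
  define D' where "D' = D \<union> (topspace X - C)"
  have UC: "U \<subseteq> C" unfolding C_def using UX by (simp add: closure_of_subset)
  have UclD: "U \<subseteq> X closure_of D"
    using Dd UX DU by (simp add: closure_of_subtopology Int_absorb1 Int_absorb2) blast
  have "C \<subseteq> X closure_of D"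
    unfolding C_def using closure_of_mono[OF UclD, of X] by simp
  also have "\<dots> \<subseteq> X closure_of D'" unfolding D'_def by (rule closure_of_mono) auto
  finally have C1: "C \<subseteq> X closure_of D'" .
  have D'X: "D' \<subseteq> topspace X" unfolding D'_def using DU by auto
  have "topspace X - C \<subseteq> X closure_of D'"
    using closure_of_subset[OF D'X] unfolding D'_def by auto
  with C1 have "topspace X \<subseteq> X closure_of D'" by blast
  then have dens: "X closure_of D' = topspace X"
    by (simp add: closure_of_subset_topspace subset_antisym)
  have pc: "pseudocompact_space (subtopology X D')"
    using dp D'X dens unfolding dense_pseudocompact_def by blast
  show "pseudocompact_space (subtopology (subtopology X U) D)"
    unfolding sub pseudocompact_space_def
  proof (intro allI impI)
    fix f :: "'a \<Rightarrow> real" assume f: "continuous_map (subtopology X D) euclideanreal f"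
    define T where "T = (\<lambda>b. if b then D else D' - C)"
    define F where "F = (\<lambda>b. if b then f else (\<lambda>_. 0::real))"
    define g where "g = (\<lambda>x. if x \<in> U then f x else 0::real)"
    have eqD: "D = U \<inter> D'" unfolding D'_def using DU UC by auto
    have oC: "openin X (topspace X - C)" unfolding C_def by (simp add: openin_diff)
    have eqC: "D' - C = (topspace X - C) \<inter> D'" using D'X by auto
    have "continuous_map (subtopology X D') euclideanreal g"
    proof (rule pasting_lemma[where I="{True,False}" and T=T and f=F])
      fix i assume "i \<in> {True, False}"
      show "openin (subtopology X D') (T i)"
        unfolding T_def openin_subtopology using U oC eqD eqC by auto
    next
      fix i assume "i \<in> {True, False}"
      have "subtopology (subtopology X D') D = subtopology X D"
        using eqD by (simp add: subtopology_subtopology Int_absorb1 Int_commute)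
      moreover have "subtopology (subtopology X D') (D' - C) = subtopology X (D' - C)"
        by (simp add: subtopology_subtopology Int_absorb1 Diff_subset)
      ultimately show "continuous_map (subtopology (subtopology X D') (T i)) euclideanreal (F i)"
        unfolding T_def F_def using f by auto
    next
      fix i j x assume "i \<in> {True, False}" "j \<in> {True, False}"
        "x \<in> topspace (subtopology X D') \<inter> T i \<inter> T j"
      then show "F i x = F j x" unfolding T_def F_def using DU UC
        by (cases i; cases j) auto
    next
      fix x assume "x \<in> topspace (subtopology X D')"
      then show "\<exists>j. j \<in> {True, False} \<and> x \<in> T j \<and> g x = F j x"
        unfolding T_def F_def g_def D'_def using DU UC by auto
    qed
    then have "bounded (g ` topspace (subtopology X D'))"
      using pc unfolding pseudocompact_space_def by blast
    moreover have "f ` topspace (subtopology X D) \<subseteq> g ` topspace (subtopology X D')"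
      unfolding g_def D'_def using DU by (auto intro!: image_eqI)
    ultimately show "bounded (f ` topspace (subtopology X D))"
      using bounded_subset by blast
  qed
qed

theorem lemma3p2:
  fixes X :: "'a topology"
  shows "dense_pseudocompact X \<longleftrightarrow>
           (\<forall>U. openin X U \<longrightarrow> dense_pseudocompact (subtopology X U))"
proof
  assume "dense_pseudocompact X" then show "\<forall>U. openin X U \<longrightarrow> dense_pseudocompact (subtopology X U)"
    using fwd by blast
next
  assume "\<forall>U. openin X U \<longrightarrow> dense_pseudocompact (subtopology X U)"
  then have "dense_pseudocompact (subtopology X (topspace X))" by blast
  then show "dense_pseudocompact X" by simp
qed

end
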